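(* Let $\mathcal{H}$ be a complex Hilbert space and $x,y,e\in\mathcal{H}$ with $\|e\|=1$. Then for every $0\le\alpha\le1$, $$|\langle x,e\rangle\langle e,y\rangle|^2\le \frac{1+\alpha}{4}\|x\|^2\|y\|^2+\frac{1-\alpha}{4}|\langle x,y\rangle|^2+\frac12\|x\|\,\|y\|\,|\langle x,y\rangle|.$$
   Context: $\langle\cdot,\cdot\rangle$ is the inner product of $\mathcal{H}$ and $\|\cdot\|$ the induced norm. *)

theory Defs
  imports "HOL-Analysis.Analysis"
begin

text \<open>Convention: the inner product is linear in the first
argument and conjugate-linear in the second; the norm is induced by it.\<close>

class complex_inner = real_normed_vector +
  fixes scaleC :: "complex \<Rightarrow> 'a \<Rightarrow> 'a"  (infixr \<open>*\<^sub>C\<close> 75)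
    and cinner :: "'a \<Rightarrow> 'a \<Rightarrow> complex"
  assumes scaleC_add_right: "a *\<^sub>C (x + y) = a *\<^sub>C x + a *\<^sub>C y"
    and scaleC_add_left: "(a + b) *\<^sub>C x = a *\<^sub>C x + b *\<^sub>C x"
    and scaleC_scaleC: "a *\<^sub>C (b *\<^sub>C x) = (a * b) *\<^sub>C x"
    and scaleC_one: "1 *\<^sub>C x = x"
    and scaleR_scaleC: "r *\<^sub>R x = complex_of_real r *\<^sub>C x"
    and cinner_commute: "cinner x y = cnj (cinner y x)"
    and cinner_add_left: "cinner (x + y) z = cinner x z + cinner y z"
    and cinner_scaleC_left: "cinner (a *\<^sub>C x) y = a * cinner x y"
    and cinner_self_Im: "Im (cinner x x) = 0"
    and cinner_self_Re_nonneg: "0 \<le> Re (cinner x x)"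
    and cinner_self_eq_zero: "cinner x x = 0 \<longleftrightarrow> x = 0"
    and norm_eq_sqrt_cinner: "norm x = sqrt (Re (cinner x x))"

class chilbert_space = complex_inner + complete_space

end

theory Submission
  imports Defs
begin

lemma ci_add_right: "cinner x (y + z) = cinner x y + cinner (x::'a::complex_inner) z"
  by (metis cinner_commute cinner_add_left complex_cnj_add)

lemma ci_scaleC_right: "cinner x (a *\<^sub>C y) = cnj a * cinner (x::'a::complex_inner) y"
  by (metis cinner_commute cinner_scaleC_left complex_cnj_mult)

lemma ci_minus_left: "cinner (- x) y = - cinner (x::'a::complex_inner) y"
proof -
  have "- x = complex_of_real (-1) *\<^sub>C x" by (metis scaleR_scaleC scaleR_minus1_left)
  then show ?thesis by (simp add: cinner_scaleC_left)
qed

lemma ci_minus_right: "cinner x (- y) = - cinner (x::'a::complex_inner) y"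
  by (metis cinner_commute ci_minus_left complex_cnj_minus)

lemma ci_diff_left: "cinner (x - y) z = cinner x z - cinner (y::'a::complex_inner) z"
  using cinner_add_left[of x "-y" z] ci_minus_left[of y z] by simp

lemma ci_diff_right: "cinner x (y - z) = cinner x y - cinner (x::'a::complex_inner) z"
  using ci_add_right[of x y "-z"] ci_minus_right[of x z] by simp

lemma ci_self: "cinner x x = complex_of_real ((norm (x::'a::complex_inner))\<^sup>2)"
proof -
  have "(norm x)\<^sup>2 = Re (cinner x x)" using norm_eq_sqrt_cinner[of x] cinner_self_Re_nonneg[of x] by simp
  then show ?thesis using cinner_self_Im by (simp add: complex_eq_iff)
qed

lemma cs: "cmod (cinner x y) \<le> norm x * norm (y::'a::complex_inner)"
proof (cases "y = 0")
  case True
  have "cinner x 0 = 0" by (metis add.right_neutral add_left_cancel ci_add_right)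
  then show ?thesis using True by simp
next
  case False
  define c where "c = cinner x y"
  define r where "r = (norm y)\<^sup>2"
  have rp: "r > 0" using False by (simp add: r_def)
  define k where "k = c / complex_of_real r"
  define z where "z = x - k *\<^sub>C y"
  have e: "cinner z z = cinner x x - cnj k * cinner x y - k * cinner y x + k * cnj k * cinner y y"
    unfolding z_def by (simp add: ci_diff_left ci_diff_right cinner_scaleC_left ci_scaleC_right) (simp add: ring_distribs mult_ac)
  have cc: "c * cnj c = complex_of_real ((cmod c)\<^sup>2)" using complex_norm_square[of c] by simp
  have rc: "complex_of_real r \<noteq> 0" using rp by simp
  have t1: "cnj k * cinner x y = complex_of_real ((cmod c)\<^sup>2 / r)"
    unfolding k_def c_def[symmetric] using cc by (simp add: mult.commute)
  have t2: "k * cinner y x = complex_of_real ((cmod c)\<^sup>2 / r)"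
    unfolding k_def c_def[symmetric] cinner_commute[of y x] c_def[symmetric] using cc by simp
  have t3: "k * cnj k * cinner y y = complex_of_real ((cmod c)\<^sup>2 / r)"
  proof -
    have "k * cnj k * cinner y y = c * cnj c / complex_of_real r * (complex_of_real r / complex_of_real r)"
      unfolding k_def ci_self[of y] r_def[symmetric] by simp
    also have "\<dots> = c * cnj c / complex_of_real r" using rc by simp
    finally show ?thesis using cc by simp
  qed
  have "cinner z z = complex_of_real ((norm x)\<^sup>2 - (cmod c)\<^sup>2 / r)"
    unfolding e t1 t2 t3 ci_self[of x] by simp
  then have "0 \<le> (norm x)\<^sup>2 - (cmod c)\<^sup>2 / r"
    using cinner_self_Re_nonneg[of z] by simp
  then have "(cmod c)\<^sup>2 / r \<le> (norm x)\<^sup>2" by simp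
  then have "(cmod c)\<^sup>2 \<le> (norm x)\<^sup>2 * r" using rp by (simp add: divide_le_eq)
  then have "(cmod c)\<^sup>2 \<le> ((norm x) * norm y)\<^sup>2" by (simp add: r_def power_mult_distrib)
  then have "cmod c \<le> norm x * norm y" by (rule power2_le_imp_le) simp
  then show ?thesis by (simp add: c_def)
qed

lemma buzano:
  fixes x y e :: "'a::complex_inner"
  assumes "norm e = 1"
  shows "2 * cmod (cinner x e * cinner e y) \<le> norm x * norm y + cmod (cinner x y)"
proof -
  define w where "w = cinner y e"
  define u where "u = (2 * w) *\<^sub>C e - y"
  have ee: "cinner e e = 1" using ci_self[of e] assms by simp
  have ey: "cinner e y = cnj w" unfolding w_def by (rule cinner_commute)
  have "cinner u u = cinner y y"
    unfolding u_def by (simp add: ci_diff_left ci_diff_right cinner_scaleC_left ci_scaleC_right ee ey w_def[symmetric])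
  then have nu: "norm u = norm y" using norm_eq_sqrt_cinner[of u] norm_eq_sqrt_cinner[of y] by simp
  have xu: "cinner x u = 2 * (cinner x e * cinner e y) - cinner x y"
    unfolding u_def by (simp add: ci_diff_right ci_scaleC_right ey)
  have "cmod (2 * (cinner x e * cinner e y)) \<le> cmod (cinner x u) + cmod (cinner x y)"
    unfolding xu using norm_triangle_sub[of "2 * (cinner x e * cinner e y)" "cinner x y"] by (simp add: add.commute)
  also have "\<dots> \<le> norm x * norm y + cmod (cinner x y)" using cs[of x u] nu by simp
  finally show ?thesis by (simp add: norm_mult)
qed

theorem mainTheorem9:
  fixes x y e :: "'a::chilbert_space" and \<alpha> :: real
  assumes "norm e = 1" and "0 \<le> \<alpha>" and "\<alpha> \<le> 1"
  shows "(cmod (cinner x e * cinner e y))\<^sup>2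
    \<le> (1 + \<alpha>) / 4 * (norm x)\<^sup>2 * (norm y)\<^sup>2
     + (1 - \<alpha>) / 4 * (cmod (cinner x y))\<^sup>2
     + 1 / 2 * norm x * norm y * cmod (cinner x y)"
proof -
  define p where "p = cmod (cinner x e * cinner e y)"
  define a where "a = norm x * norm y"
  define b where "b = cmod (cinner x y)"
  have h1: "2 * p \<le> a + b" using buzano[OF assms(1), of x y] by (simp add: p_def a_def b_def)
  have h2: "b \<le> a" using cs[of x y] by (simp add: a_def b_def)
  have b0: "0 \<le> b" by (simp add: b_def)
  have p0: "0 \<le> p" by (simp add: p_def)
  have "(2 * p)\<^sup>2 \<le> (a + b)\<^sup>2" using h1 p0 by (intro power_mono) auto
  then have s: "p\<^sup>2 \<le> (a\<^sup>2 + 2 * a * b + b\<^sup>2) / 4" by (simp add: power2_eq_square algebra_simps)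
  have "0 \<le> \<alpha> * (a\<^sup>2 - b\<^sup>2)" using assms(2) h2 b0
    by (intro mult_nonneg_nonneg) (auto intro: power_mono)
  then have "p\<^sup>2 \<le> (1 + \<alpha>) / 4 * a\<^sup>2 + (1 - \<alpha>) / 4 * b\<^sup>2 + 1/2 * a * b"
    using s by (simp add: field_simps)
  then show ?thesis by (simp add: p_def a_def b_def power_mult_distrib mult.assoc)
qed

end
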